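(* Let $U\in\mathbb{R}^{n\times d}$, let $\mathbf{x}_*\in\mathbb{R}^d$ be $s$-sparse and $\mathbf{y}=U\mathbf{x}_*$ (noiseless). Let $\mathbf{x}_t$ be an iterate of Algorithm 1 with support $\mathcal{S}_t$, and $\mathcal{S}_*$ the support of $\mathbf{x}_*$. If $|\mathcal{S}_t\setminus\mathcal{S}_*|\le s$, $\|\mathbf{x}_t-\mathbf{x}_*\|_2\le\Delta_t$ and $\lambda_t=\frac{\delta_s+\sqrt2\theta_{s,s}}{\sqrt s}\Delta_t$, then \[ \|\mathbf{x}_{t+1}-\mathbf{x}_*\|_2\le(\delta_s+\sqrt2\theta_{s,s}+\delta_{3s})\Delta_t . \]
   Context: $U_{\mathcal T}$ is the column submatrix of $U$ indexed by $\mathcal T$. $\delta_k$ is the smallest constant $\ge0$ with $(1-\delta_k)\|\mathbf{v}\|_2^2\le\|U_{\mathcal T}\mathbf{v}\|_2^2\le(1+\delta_k)\|\mathbf{v}\|_2^2$ for all $|\mathcal T|\le k$, $\mathbf{v}\in\mathbb{R}^{|\mathcal T|}$; $\theta_{s,s}$ (with $2s\le d$) is the smallest constant with $|\langle U_{\mathcal T}\mathbf{v},U_{\mathcal T'}\mathbf{v}'\rangle|\le\theta_{s,s}\|\mathbf{v}\|_2\|\mathbf{v}'\|_2$ for all disjoint $\mathcal T,\mathcal T'$ of size at most $s$. Algorithm 1: $\mathbf{x}_1=0$ and $\mathbf{x}_{t+1}=\mathrm{sign}(\widehat{\mathbf{x}}_t)[|\widehat{\mathbf{x}}_t|-\lambda_t]_+$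 with $\widehat{\mathbf{x}}_t=\mathbf{x}_t-U^\top(U\mathbf{x}_t-\mathbf{y})$ (componentwise), for parameters $\lambda_t>0$. *)

theory Defs
  imports "HOL-Analysis.Analysis"
begin

definition supp :: "real^'d \<Rightarrow> 'd set" where
  "supp x = {i. x $ i \<noteq> 0}"

text \<open>Restricted isometry constant delta_k of U. A vector U_T v with |T| \<le> k,
  v in R^|T|, is exactly U z for a vector z supported in T (z extends v by zeros).\<close>
definition rip_const :: "real^'d^'n \<Rightarrow> nat \<Rightarrow> real" where
  "rip_const U k = Inf {\<delta>. 0 \<le> \<delta> \<and>
     (\<forall>z :: real^'d. card (supp z) \<le> k \<longrightarrow>
        (1 - \<delta>) * (norm z)^2 \<le> (norm (U *v z))^2 \<and>
        (norm (U *v z))^2 \<le> (1 + \<delta>) * (norm z)^2)}"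

definition rop_const :: "real^'d^'n \<Rightarrow> nat \<Rightarrow> real" where
  "rop_const U s = Inf {\<theta>. 0 \<le> \<theta> \<and>
     (\<forall>z z' :: real^'d. card (supp z) \<le> s \<longrightarrow> card (supp z') \<le> s \<longrightarrow>
        supp z \<inter> supp z' = {} \<longrightarrow>
        \<bar>(U *v z) \<bullet> (U *v z')\<bar> \<le> \<theta> * norm z * norm z')}"

definition soft_thr :: "real \<Rightarrow> real^'d \<Rightarrow> real^'d" where
  "soft_thr lm x = (\<chi> i. sgn (x $ i) * max (\<bar>x $ i\<bar> - lm) 0)"

text \<open>Algorithm 1. Index shift: alg U y lam 0 is x_1 = 0, and alg U y lam t is
  x_{t+1}; the threshold used to produce alg (Suc t) from alg t is lam t.\<close>
fun alg :: "real^'d^'n \<Rightarrow> real^'n \<Rightarrow> (nat \<Rightarrow> real) \<Rightarrow> nat \<Rightarrow> real^'d" where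
  "alg U y lam 0 = 0"
| "alg U y lam (Suc t) =
     soft_thr (lam t) (alg U y lam t - transpose U *v (U *v alg U y lam t - y))"

end

theory Submission imports Defs begin

lemma adj: fixes U :: "real^'d^'n"
  shows "(U *v v) \<bullet> w = v \<bullet> (transpose U *v w)"
proof -
  have "v \<bullet> (transpose U *v w) = (w v* U) \<bullet> v" by (simp add: inner_commute)
  also have "\<dots> = w \<bullet> (U *v v)" by (rule dot_lmul_matrix)
  also have "\<dots> = (U *v v) \<bullet> w" by (rule inner_commute)
  finally show ?thesis by simp
qed

lemma U_bound: fixes U :: "real^'d^'n"
  obtains B where "B > 0" "\<And>z. norm (U *v z) \<le> B * norm z"
  using bounded_linear.pos_bounded[OF matrix_vector_mul_bounded_linear[of U]]
  by (metis mult.commute)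

lemma rip_prop: fixes U :: "real^'d^'n"
  assumes "card (supp z) \<le> k"
  shows "(1 - rip_const U k) * (norm z)^2 \<le> (norm (U *v z))^2 \<and>
        (norm (U *v z))^2 \<le> (1 + rip_const U k) * (norm z)^2"
    and "0 \<le> rip_const U k"
proof -
  define A where "A = {\<delta>. 0 \<le> \<delta> \<and>
     (\<forall>z :: real^'d. card (supp z) \<le> k \<longrightarrow>
        (1 - \<delta>) * (norm z)^2 \<le> (norm (U *v z))^2 \<and>
        (norm (U *v z))^2 \<le> (1 + \<delta>) * (norm z)^2)}"
  have rc: "rip_const U k = Inf A" unfolding rip_const_def A_def by simp
  obtain B where B: "B > 0" "\<And>z. norm (U *v z) \<le> B * norm z" using U_bound by blast
  have "1 + B^2 \<in> A" unfolding A_def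
  proof (safe)
    fix z :: "real^'d"
    have "norm (U *v z) ^2 \<le> (B * norm z)^2"
      using B(2)[of z] by (simp add: power_mono)
    also have "\<dots> \<le> (1 + (1 + B^2)) * (norm z)^2"
      by (simp add: power_mult_distrib mult_right_mono)
    finally show "(norm (U *v z))^2 \<le> (1 + (1 + B^2)) * (norm z)^2" .
    show "(1 - (1 + B^2)) * (norm z)^2 \<le> (norm (U *v z))^2"
    proof -
      have "(1 - (1 + B^2)) * (norm z)^2 = - (B^2 * (norm z)^2)" by simp
      also have "\<dots> \<le> 0" by simp
      also have "0 \<le> (norm (U *v z))^2" by simp
      finally show ?thesis .
    qed
  qed auto
  hence ne: "A \<noteq> {}" by blast
  have bdd: "bdd_below A" unfolding A_def by (rule bdd_belowI[of _ 0]) auto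
  show "0 \<le> rip_const U k" unfolding rc
    by (rule cInf_greatest[OF ne]) (auto simp: A_def)
  show "(1 - rip_const U k) * (norm z)^2 \<le> (norm (U *v z))^2 \<and>
        (norm (U *v z))^2 \<le> (1 + rip_const U k) * (norm z)^2"
  proof (cases "norm z = 0")
    case True then show ?thesis by simp
  next
    case False
    hence p: "(norm z)^2 > 0" by simp
    have l: "((norm z)^2 - (norm (U *v z))^2) / (norm z)^2 \<le> Inf A"
    proof (rule cInf_greatest[OF ne])
      fix d assume "d \<in> A"
      hence "(1 - d) * (norm z)^2 \<le> (norm (U *v z))^2" using assms unfolding A_def by blast
      thus "((norm z)^2 - (norm (U *v z))^2) / (norm z)^2 \<le> d" using p
        by (simp add: divide_le_eq algebra_simps)
    qed
    have u: "((norm (U *v z))^2 - (norm z)^2) / (norm z)^2 \<le> Inf A"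
    proof (rule cInf_greatest[OF ne])
      fix d assume "d \<in> A"
      hence "(norm (U *v z))^2 \<le> (1 + d) * (norm z)^2" using assms unfolding A_def by blast
      thus "((norm (U *v z))^2 - (norm z)^2) / (norm z)^2 \<le> d" using p
        by (simp add: divide_le_eq algebra_simps)
    qed
    show ?thesis using l u p unfolding rc
      by (simp add: divide_le_eq algebra_simps)
  qed
qed

lemma rop_prop: fixes U :: "real^'d^'n"
  assumes "card (supp z) \<le> s" "card (supp z') \<le> s" "supp z \<inter> supp z' = {}"
  shows "\<bar>(U *v z) \<bullet> (U *v z')\<bar> \<le> rop_const U s * norm z * norm z'"
    and "0 \<le> rop_const U s"
proof -
  define A where "A = {\<theta>. 0 \<le> \<theta> \<and>
     (\<forall>z z' :: real^'d. card (supp z) \<le> s \<longrightarrow> card (supp z') \<le> s \<longrightarrow>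
        supp z \<inter> supp z' = {} \<longrightarrow>
        \<bar>(U *v z) \<bullet> (U *v z')\<bar> \<le> \<theta> * norm z * norm z')}"
  have rc: "rop_const U s = Inf A" unfolding rop_const_def A_def by simp
  obtain B where B: "B > 0" "\<And>z. norm (U *v z) \<le> B * norm z" using U_bound by blast
  have "B^2 \<in> A" unfolding A_def
  proof (safe)
    fix z z' :: "real^'d"
    have "\<bar>(U *v z) \<bullet> (U *v z')\<bar> \<le> norm (U *v z) * norm (U *v z')"
      by (rule Cauchy_Schwarz_ineq2)
    also have "\<dots> \<le> (B * norm z) * (B * norm z')"
      using B by (intro mult_mono) auto
    finally show "\<bar>(U *v z) \<bullet> (U *v z')\<bar> \<le> B^2 * norm z * norm z'"
      by (simp add: power2_eq_square mult_ac)
  qed auto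
  hence ne: "A \<noteq> {}" by blast
  show "0 \<le> rop_const U s" unfolding rc
    by (rule cInf_greatest[OF ne]) (auto simp: A_def)
  show "\<bar>(U *v z) \<bullet> (U *v z')\<bar> \<le> rop_const U s * norm z * norm z'"
  proof (cases "norm z * norm z' = 0")
    case True then show "\<bar>(U *v z) \<bullet> (U *v z')\<bar> \<le> rop_const U s * norm z * norm z'" by auto
  next
    case False
    hence p: "norm z * norm z' > 0" by (simp add: less_le)
    have "\<bar>(U *v z) \<bullet> (U *v z')\<bar> / (norm z * norm z') \<le> Inf A"
    proof (rule cInf_greatest[OF ne])
      fix d assume "d \<in> A"
      hence "\<bar>(U *v z) \<bullet> (U *v z')\<bar> \<le> d * norm z * norm z'" using assms unfolding A_def by blast
      thus "\<bar>(U *v z) \<bullet> (U *v z')\<bar> / (norm z * norm z') \<le> d" using p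
        by (simp add: divide_le_eq mult_ac)
    qed
    thus "\<bar>(U *v z) \<bullet> (U *v z')\<bar> \<le> rop_const U s * norm z * norm z'"
      using p unfolding rc by (simp add: divide_le_eq mult_ac)
  qed
qed

lemma aux4: "X * 4 \<le> 2 * D \<Longrightarrow> - X * 4 \<le> 2 * D \<Longrightarrow> \<bar>X\<bar> \<le> D / (2::real)"
  by linarith

lemma pol0: fixes U :: "real^'d^'n"
  assumes "card (supp a \<union> supp b) \<le> k"
  shows "\<bar>a \<bullet> b - (U *v a) \<bullet> (U *v b)\<bar> \<le> rip_const U k * ((norm a)^2 + (norm b)^2) / 2"
proof -
  have sub: "supp (a + b) \<subseteq> supp a \<union> supp b" "supp (a - b) \<subseteq> supp a \<union> supp b"
    unfolding supp_def by auto
  have c1: "card (supp (a + b)) \<le> k" "card (supp (a - b)) \<le> k"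
    using card_mono[OF finite sub(1)] card_mono[OF finite sub(2)] assms by auto
  note p1 = rip_prop(1)[OF c1(1), of U] and p2 = rip_prop(1)[OF c1(2), of U]
  have d: "0 \<le> rip_const U k" using rip_prop(2)[OF c1(1)] .
  have e1: "(norm (a+b))^2 = (norm a)^2 + 2 * (a \<bullet> b) + (norm b)^2"
    "(norm (a-b))^2 = (norm a)^2 - 2 * (a \<bullet> b) + (norm b)^2"
    by (simp_all add: power2_norm_eq_inner inner_add_left inner_add_right inner_diff_left inner_diff_right inner_commute)
  have e2: "(norm (U *v (a+b)))^2 = (norm (U *v a))^2 + 2 * ((U *v a) \<bullet> (U *v b)) + (norm (U *v b))^2"
    "(norm (U *v (a-b)))^2 = (norm (U *v a))^2 - 2 * ((U *v a) \<bullet> (U *v b)) + (norm (U *v b))^2"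
    by (simp_all add: matrix_vector_right_distrib matrix_vector_mult_diff_distrib
        power2_norm_eq_inner inner_add_left inner_add_right inner_diff_left inner_diff_right inner_commute)
  have "(a \<bullet> b - (U *v a) \<bullet> (U *v b)) * 4 \<le> rip_const U k * ((norm (a+b))^2 + (norm (a-b))^2)"
    using p1 p2 unfolding e1 e2 by (simp add: algebra_simps)
  moreover have "-(a \<bullet> b - (U *v a) \<bullet> (U *v b)) * 4 \<le> rip_const U k * ((norm (a+b))^2 + (norm (a-b))^2)"
    using p1 p2 unfolding e1 e2 by (simp add: algebra_simps)
  moreover have "(norm (a+b))^2 + (norm (a-b))^2 = 2 * ((norm a)^2 + (norm b)^2)"
    unfolding e1 by simp
  ultimately have "(a \<bullet> b - (U *v a) \<bullet> (U *v b)) * 4 \<le> 2 * (rip_const U k * ((norm a)^2 + (norm b)^2))"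
     "-(a \<bullet> b - (U *v a) \<bullet> (U *v b)) * 4 \<le> 2 * (rip_const U k * ((norm a)^2 + (norm b)^2))"
    by (simp_all only: mult_ac)
  then show ?thesis by (rule aux4)
qed

lemma pol: fixes U :: "real^'d^'n"
  assumes "card (supp p \<union> supp q) \<le> k"
  shows "\<bar>p \<bullet> q - (U *v p) \<bullet> (U *v q)\<bar> \<le> rip_const U k * norm p * norm q"
proof (cases "p = 0 \<or> q = 0")
  case True then show ?thesis by auto
next
  case False
  hence np: "norm p > 0" "norm q > 0" by auto
  define c where "c = sqrt (norm q / norm p)"
  have cp: "c > 0" using np by (simp add: c_def)
  have c2: "c^2 = norm q / norm p" using np by (simp add: c_def)
  have sa: "supp (c *\<^sub>R p) = supp p" "supp ((1/c) *\<^sub>R q) = supp q"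
    using cp unfolding supp_def by auto
  have H: "\<bar>(c *\<^sub>R p) \<bullet> ((1/c) *\<^sub>R q) - (U *v (c *\<^sub>R p)) \<bullet> (U *v ((1/c) *\<^sub>R q))\<bar>
     \<le> rip_const U k * ((norm (c *\<^sub>R p))^2 + (norm ((1/c) *\<^sub>R q))^2) / 2"
    by (rule pol0) (use assms sa in simp)
  have f2: "(c *\<^sub>R p) \<bullet> ((1/c) *\<^sub>R q) = p \<bullet> q" using cp by simp
  have f3: "(U *v (c *\<^sub>R p)) \<bullet> (U *v ((1/c) *\<^sub>R q)) = (U *v p) \<bullet> (U *v q)"
    using cp by (simp add: matrix_vector_mult_scaleR)
  have cc: "c * c * norm p = norm q" using c2 np by (simp add: power2_eq_square field_simps)
  have f4: "(norm (c *\<^sub>R p))^2 = norm p * norm q"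
    using cp np cc by (simp add: power_mult_distrib power2_eq_square mult_ac)
  have f5: "(norm ((1/c) *\<^sub>R q))^2 = norm p * norm q"
    using cp np c2 by (simp add: power_mult_distrib power_divide power2_eq_square field_simps)
  show ?thesis using H unfolding f2 f3 f4 f5 by (simp add: mult_ac)
qed

lemma soft1: "0 \<le> l \<Longrightarrow> \<bar>sgn z * max (\<bar>z\<bar> - l) 0 - z\<bar> \<le> (l::real)"
  by (cases "z > 0"; cases "z < 0") (auto simp: max_def)
lemma soft2: "0 \<le> l \<Longrightarrow> \<bar>sgn z * max (\<bar>z\<bar> - l) 0\<bar> \<le> \<bar>z::real\<bar>"
  by (cases "z > 0"; cases "z < 0") (auto simp: max_def)
lemma soft3: "\<bar>z\<bar> \<le> l \<Longrightarrow> sgn z * max (\<bar>z\<bar> - l) 0 = (0::real)"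
  by (auto simp: max_def)

theorem proposition2:
  fixes U :: "real^'d^'n" and xs :: "real^'d" and y :: "real^'n"
    and lam :: "nat \<Rightarrow> real" and s t :: nat and \<Delta> :: real
  assumes "0 < s" and "2 * s \<le> CARD('d)"
    and "card (supp xs) \<le> s"
    and "y = U *v xs"
    and "\<forall>k. 0 < lam k"
    and "card (supp (alg U y lam t) - supp xs) \<le> s"
    and "norm (alg U y lam t - xs) \<le> \<Delta>"
    and "lam t = (rip_const U s + sqrt 2 * rop_const U s) / sqrt (real s) * \<Delta>"
  shows "norm (alg U y lam (Suc t) - xs)
           \<le> (rip_const U s + sqrt 2 * rop_const U s + rip_const U (3 * s)) * \<Delta>"
proof -
  define x where "x = alg U y lam t"
  define \<delta> where "\<delta> = rip_const U s"
  define \<theta> where "\<theta> = rop_const U s"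
  define dthree where "dthree = rip_const U (3 * s)"
  define l where "l = lam t"
  define e where "e = x - xs"
  define G where "G = transpose U *v (U *v e)"
  define S where "S = supp xs \<union> supp x"
  define R where "R = {i. i \<notin> S \<and> l < \<bar>G $ i\<bar>}"
  have lpos: "0 < l" using assms(5) by (simp add: l_def)
  have Dnn: "0 \<le> \<Delta>" using assms(7) norm_ge_zero order.trans by blast
  have enorm: "norm e \<le> \<Delta>" using assms(7) by (simp add: e_def x_def)
  have x1: "alg U y lam (Suc t) = soft_thr l (x - G)"
    by (simp add: x_def l_def G_def e_def assms(4) matrix_vector_mult_diff_distrib)
  have z0: "card (supp (0::real^'d)) \<le> k" for k by (simp add: supp_def)
  have d0: "0 \<le> \<delta>" unfolding \<delta>_def by (rule rip_prop(2)[OF z0])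
  have t0: "0 \<le> \<theta>" unfolding \<theta>_def by (rule rop_prop(2)[OF z0 z0]) (simp add: supp_def)
  have d30: "0 \<le> dthree" unfolding dthree_def by (rule rip_prop(2)[OF z0])
  have sq: "sqrt (real s) > 0" using assms(1) by simp
  have lsq: "l * sqrt (real s) = (\<delta> + sqrt 2 * \<theta>) * \<Delta>"
    using sq by (simp add: l_def assms(8) \<delta>_def \<theta>_def)
  have Gout: "(x - G) $ i = - G $ i" if "i \<notin> S" for i
    using that by (simp add: S_def supp_def)
  have esupp: "supp e \<subseteq> S" by (auto simp: supp_def e_def S_def)
  have cardR: "card R \<le> s"
  proof (rule ccontr)
    assume "\<not> card R \<le> s"
    hence "s \<le> card R" by simp
    then obtain R' where R': "R' \<subseteq> R" "card R' = s" "finite R'"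
      using obtain_subset_with_card_n by metis
    define v where "v = (\<chi> i. if i \<in> R' then G $ i else 0)"
    define e1 where "e1 = (\<chi> i. if i \<in> supp xs then e $ i else 0)"
    define e2 where "e2 = e - e1"
    have sv: "supp v \<subseteq> R'" by (auto simp: supp_def v_def)
    have cv: "card (supp v) \<le> s" using card_mono[OF R'(3) sv] R'(2) by simp
    have se1: "supp e1 \<subseteq> supp xs" by (auto simp: supp_def e1_def)
    have ce1: "card (supp e1) \<le> s" using card_mono[OF finite se1] assms(3) by simp
    have se2: "supp e2 \<subseteq> supp x - supp xs"
      by (auto simp: supp_def e2_def e1_def e_def)
    have ce2: "card (supp e2) \<le> s" using card_mono[OF finite se2] assms(6) by (simp add: x_def)
    have RS: "R' \<inter> S = {}" using R'(1) by (auto simp: R_def)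
    have dj1: "supp v \<inter> supp e1 = {}" using sv se1 RS by (auto simp: S_def)
    have dj2: "supp v \<inter> supp e2 = {}" using sv se2 RS by (auto simp: S_def)
    have vG: "v \<bullet> G = v \<bullet> v"
      unfolding inner_vec_def by (rule sum.cong) (auto simp: v_def)
    have "v \<bullet> G = (U *v v) \<bullet> (U *v e)" by (simp add: G_def adj)
    also have "\<dots> = (U *v v) \<bullet> (U *v e1) + (U *v v) \<bullet> (U *v e2)"
      by (simp add: e2_def matrix_vector_mult_diff_distrib inner_diff_right)
    also have "\<dots> \<le> \<theta> * norm v * norm e1 + \<theta> * norm v * norm e2"
      using rop_prop(1)[OF cv ce1 dj1, of U] rop_prop(1)[OF cv ce2 dj2, of U]
      unfolding \<theta>_def by linarith
    finally have v1: "(norm v)^2 \<le> \<theta> * norm v * (norm e1 + norm e2)"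
      using vG by (simp add: power2_norm_eq_inner algebra_simps)
    have e12: "e1 \<bullet> e2 = 0"
      unfolding inner_vec_def by (rule sum.neutral) (auto simp: e2_def e1_def)
    have "(norm e)^2 = (norm e1)^2 + (norm e2)^2"
    proof -
      have "e = e1 + e2" by (simp add: e2_def)
      hence "(norm e)^2 = (e1 + e2) \<bullet> (e1 + e2)" by (simp add: power2_norm_eq_inner)
      also have "\<dots> = (norm e1)^2 + (norm e2)^2"
        using e12 by (simp add: power2_norm_eq_inner inner_add_left inner_add_right inner_commute)
      finally show ?thesis .
    qed
    hence eq2: "(sqrt 2 * norm e)^2 = 2 * ((norm e1)^2 + (norm e2)^2)"
      by (simp add: power_mult_distrib)
    have "(norm e1 + norm e2)^2 \<le> 2 * ((norm e1)^2 + (norm e2)^2)"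
      using zero_le_power2[of "norm e1 - norm e2"] unfolding power2_sum power2_diff by (smt (verit))
    hence "(norm e1 + norm e2)^2 \<le> (sqrt 2 * norm e)^2" unfolding eq2 .
    hence "norm e1 + norm e2 \<le> sqrt 2 * norm e"
      by (rule power2_le_imp_le) simp
    also have "\<dots> \<le> sqrt 2 * \<Delta>" using enorm by simp
    finally have ee: "norm e1 + norm e2 \<le> sqrt 2 * \<Delta>" .
    have "\<theta> * norm v * (norm e1 + norm e2) \<le> \<theta> * norm v * (sqrt 2 * \<Delta>)"
      using ee t0 by (intro mult_left_mono) auto
    with v1 have v2: "(norm v)^2 \<le> norm v * (sqrt 2 * \<theta> * \<Delta>)" by (simp add: mult_ac)
    have nv: "norm v \<le> sqrt 2 * \<theta> * \<Delta>"
    proof (cases "norm v = 0")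
      case True thus ?thesis using t0 Dnn by simp
    next
      case False
      hence "norm v > 0" by simp
      thus ?thesis using v2 by (simp add: power2_eq_square)
    qed
    have "(norm v)^2 = (\<Sum>i\<in>R'. (G $ i)^2)"
    proof -
      have "(norm v)^2 = v \<bullet> v" by (rule power2_norm_eq_inner)
      also have "\<dots> = (\<Sum>i\<in>UNIV. (v $ i)^2)" by (simp add: inner_vec_def power2_eq_square)
      also have "\<dots> = (\<Sum>i\<in>UNIV. if i \<in> R' then (G $ i)^2 else 0)"
        by (rule sum.cong) (auto simp: v_def)
      also have "\<dots> = (\<Sum>i\<in>R'. (G $ i)^2)"
        by (simp add: sum.If_cases)
      finally show ?thesis .
    qed
    moreover have "(\<Sum>i\<in>R'. l^2) < (\<Sum>i\<in>R'. (G $ i)^2)"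
    proof (rule sum_strict_mono)
      show "finite R'" by fact
      show "R' \<noteq> {}" using R'(2) assms(1) by auto
      fix i assume "i \<in> R'"
      hence "l < \<bar>G $ i\<bar>" using R'(1) by (auto simp: R_def)
      thus "l^2 < (G $ i)^2" using lpos power_strict_mono[of l "\<bar>G $ i\<bar>" 2] by simp
    qed
    moreover have "(\<Sum>i\<in>R'. l^2) = (l * sqrt (real s))^2"
      using R'(2) by (simp add: power_mult_distrib)
    moreover have "(sqrt 2 * \<theta> * \<Delta>)^2 \<le> (l * sqrt (real s))^2"
      unfolding lsq using d0 t0 Dnn
      by (intro power_mono mult_right_mono) auto
    moreover have "(norm v)^2 \<le> (sqrt 2 * \<theta> * \<Delta>)^2"
      using nv by (simp add: power_mono)
    ultimately show False by linarith
  qed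
  define T where "T = S \<union> R"
  have cardS: "card S \<le> 2 * s"
  proof -
    have "S = supp xs \<union> (supp x - supp xs)" by (auto simp: S_def)
    hence "card S \<le> card (supp xs) + card (supp x - supp xs)" by (metis card_Un_le)
    thus ?thesis using assms(3) assms(6) by (simp add: x_def)
  qed
  have cardT: "card T \<le> 3 * s"
    using card_Un_le[of S R] cardS cardR by (simp add: T_def)
  define g where "g = e - G"
  define a where "a = (\<chi> i. if i \<in> T then g $ i else 0)"
  have sa: "supp a \<subseteq> T" by (auto simp: supp_def a_def)
  have cae: "card (supp a \<union> supp e) \<le> 3 * s"
  proof -
    have "supp a \<union> supp e \<subseteq> T" using sa esupp by (auto simp: T_def)
    thus ?thesis using card_mono[OF finite] cardT by (meson order.trans)
  qed
  have ag: "a \<bullet> g = a \<bullet> a"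
    unfolding inner_vec_def by (rule sum.cong) (auto simp: a_def)
  have "a \<bullet> g = a \<bullet> e - (U *v a) \<bullet> (U *v e)"
    by (simp add: g_def G_def inner_diff_right adj)
  hence "(norm a)^2 \<le> dthree * norm a * norm e"
    using pol[OF cae, of U] ag unfolding dthree_def by (simp add: power2_norm_eq_inner)
  hence na: "norm a \<le> dthree * \<Delta>"
  proof (cases "norm a = 0")
    case True thus ?thesis using d30 Dnn by simp
  next
    case False
    assume h: "(norm a)^2 \<le> dthree * norm a * norm e"
    from False have "norm a > 0" by simp
    with h have "norm a \<le> dthree * norm e" by (simp add: power2_eq_square mult_ac)
    also have "\<dots> \<le> dthree * \<Delta>" using d30 enorm by (simp add: mult_left_mono)
    finally show ?thesis .
  qed
  define b where "b = (\<chi> i. if i \<in> supp xs then l else 0)"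
  have nb: "norm b \<le> l * sqrt (real s)"
  proof -
    have "(norm b)^2 = b \<bullet> b" by (rule power2_norm_eq_inner)
    also have "\<dots> = (\<Sum>i\<in>UNIV. (b $ i)^2)" by (simp add: inner_vec_def power2_eq_square)
    also have "\<dots> = (\<Sum>i\<in>UNIV. if i \<in> supp xs then l^2 else 0)"
      by (rule sum.cong) (auto simp: b_def)
    also have "\<dots> = real (card (supp xs)) * l^2" by (simp add: sum.If_cases)
    also have "\<dots> \<le> real s * l^2" using assms(3) by (simp add: mult_right_mono)
    also have "\<dots> = (l * sqrt (real s))^2" by (simp add: power_mult_distrib)
    finally have "(norm b)^2 \<le> (l * sqrt (real s))^2" .
    thus ?thesis by (rule power2_le_imp_le) (use lpos in simp)
  qed
  define c where "c = (\<chi> i. \<bar>a $ i\<bar> + \<bar>b $ i\<bar>)"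
  have comp: "\<bar>(alg U y lam (Suc t) - xs) $ i\<bar> \<le> \<bar>c $ i\<bar>" for i
  proof -
    define z where "z = (x - G) $ i"
    have xi: "alg U y lam (Suc t) $ i = sgn z * max (\<bar>z\<bar> - l) 0"
      unfolding x1 soft_thr_def z_def by (simp only: vec_lambda_beta)
    have cnn: "\<bar>c $ i\<bar> = \<bar>a $ i\<bar> + \<bar>b $ i\<bar>" by (simp add: c_def)
    have lhs: "(alg U y lam (Suc t) - xs) $ i = sgn z * max (\<bar>z\<bar> - l) 0 - xs $ i"
      using xi by (simp del: alg.simps)
    have key: "\<bar>sgn z * max (\<bar>z\<bar> - l) 0 - xs $ i\<bar> \<le> \<bar>a $ i\<bar> + \<bar>b $ i\<bar>"
    proof (cases "i \<in> supp xs")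
      case True
      hence "i \<in> T" by (auto simp: T_def S_def)
      hence ai: "a $ i = z - xs $ i" by (simp add: a_def g_def z_def e_def)
      have bi: "b $ i = l" using True by (simp add: b_def)
      have "\<bar>sgn z * max (\<bar>z\<bar> - l) 0 - xs $ i\<bar> \<le> \<bar>sgn z * max (\<bar>z\<bar> - l) 0 - z\<bar> + \<bar>z - xs $ i\<bar>"
        by linarith
      also have "\<dots> \<le> l + \<bar>z - xs $ i\<bar>" using soft1[of l z] lpos by simp
      finally show ?thesis using ai bi lpos by simp
    next
      case False
      hence xs0: "xs $ i = 0" by (simp add: supp_def)
      show ?thesis
      proof (cases "i \<in> T")
        case True
        hence ai: "a $ i = z" using xs0 by (simp add: a_def g_def z_def e_def)
        show ?thesis using xs0 ai soft2[of l z] lpos abs_ge_zero[of "b $ i"] by simp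
      next
        case nT: False
        hence "i \<notin> S" "i \<notin> R" by (auto simp: T_def)
        hence "\<bar>z\<bar> \<le> l" using Gout[of i] by (auto simp: R_def z_def)
        thus ?thesis using xs0 soft3 by simp
      qed
    qed
    show ?thesis unfolding lhs cnn by (rule key)
  qed
  have "norm (alg U y lam (Suc t) - xs) \<le> norm c"
    by (rule norm_le_componentwise_cart) (use comp in \<open>simp del: alg.simps\<close>)
  also have "norm c \<le> norm (\<chi> i. \<bar>a $ i\<bar>) + norm (\<chi> i. \<bar>b $ i\<bar>)"
  proof -
    have "c = (\<chi> i. \<bar>a $ i\<bar>) + (\<chi> i. \<bar>b $ i\<bar>)" by (simp add: c_def vec_eq_iff)
    thus ?thesis by (metis norm_triangle_ineq)
  qed
  also have "norm (\<chi> i. \<bar>a $ i\<bar>) = norm a" by (simp add: norm_vec_def)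
  also have "norm (\<chi> i. \<bar>b $ i\<bar>) = norm b" by (simp add: norm_vec_def)
  finally have "norm (alg U y lam (Suc t) - xs) \<le> norm a + norm b" .
  also have "\<dots> \<le> dthree * \<Delta> + (\<delta> + sqrt 2 * \<theta>) * \<Delta>" using na nb lsq by linarith
  also have "\<dots> = (rip_const U s + sqrt 2 * rop_const U s + rip_const U (3 * s)) * \<Delta>"
    by (simp add: \<delta>_def \<theta>_def dthree_def algebra_simps)
  finally show ?thesis .
qed

end
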